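(* Let $G=([n],E)$ be a persistent graph and let $S\in\Xi(G)$ be a 3-simplex containing vertices $a<b<c$ such that $\{a,b,c\}\notin F_2(C)$, where $C=C(n+2,3)$. Then there exists another 3-simplex $S'\in\Xi(G)$, $S'\neq S$, with $\{a,b,c\}\subset S'$.
   Context: The cyclic polytope $C=C(n+2,3)$ has vertices $0,1,\dots,n+1$ (ordered along the moment curve $t\mapsto(t,t^2,t^3)$), and its 2-faces (as vertex sets) are $F_2(C)=\{\{0,i,i+1\},\{i-1,i,n+1\}: 0<i<n+1\}$. A graph $G=([n],E)$ is persistent if (1) $\{i,i+1\}\in E$ for all $1\le i<n$; (2) (X-property) if $\{a,c\},\{b,d\}\in E$ for $a<b<c<d$ then $\{a,d\}\in E$; (3) (bar-property) for every edge $\{a,b\}\in E$ with $a<b-1$ there is $x$ with $a<x<b$ and $\{a,x\},\{x,b\}\in E$. $\hat G$ is the graph on $\{0,\dots,n+1\}$ with edge set $E$ together with all pairs containing $0$ or $n+1$. For an edge $e=\{v,w\}\in E$ with $v<w$, $\ell_G(e)=\max\{i : i<v,\ \{i,w\}\in E(\hat G)\}$, $r_G(e)=\min\{i : w<i,\ \{i,v\}\in E(\hat G)\}$, $\xi_G(e)=\{\ell_G(e),v,w,r_G(e)\}$, and $\Xi(G)=\{\xi_G(e): e\in E\}$. *)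

theory Defs
  imports Main
begin

definition cyclic_faces2 :: "nat \<Rightarrow> nat set set" where
  "cyclic_faces2 n = {{0, i, i + 1} | i. 0 < i \<and> i < n + 1}
                   \<union> {{i - 1, i, n + 1} | i. 0 < i \<and> i < n + 1}"

definition is_graph :: "nat \<Rightarrow> nat set set \<Rightarrow> bool" where
  "is_graph n E \<longleftrightarrow> (\<forall>e\<in>E. \<exists>u v. e = {u, v} \<and> u \<noteq> v \<and> u \<in> {1..n} \<and> v \<in> {1..n})"

definition persistent :: "nat \<Rightarrow> nat set set \<Rightarrow> bool" where
  "persistent n E \<longleftrightarrow> is_graph n E
     \<and> (\<forall>i. 1 \<le> i \<and> i < n \<longrightarrow> {i, i + 1} \<in> E)
     \<and> (\<forall>a b c d. a < b \<and> b < c \<and> c < d \<and> {a, c} \<in> E \<and> {b, d} \<in> E \<longrightarrow> {a, d} \<in> E)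
     \<and> (\<forall>a b. {a, b} \<in> E \<and> a + 1 < b \<longrightarrow> (\<exists>x. a < x \<and> x < b \<and> {a, x} \<in> E \<and> {x, b} \<in> E))"

definition hat_edges :: "nat \<Rightarrow> nat set set \<Rightarrow> nat set set" where
  "hat_edges n E = E \<union> {{u, v} | u v. u \<noteq> v \<and> u \<le> n + 1 \<and> v \<le> n + 1
                                     \<and> (u = 0 \<or> u = n + 1)}"

definition ellG :: "nat \<Rightarrow> nat set set \<Rightarrow> nat \<Rightarrow> nat \<Rightarrow> nat" where
  "ellG n E v w = Max {i. i < v \<and> {i, w} \<in> hat_edges n E}"

definition rG :: "nat \<Rightarrow> nat set set \<Rightarrow> nat \<Rightarrow> nat \<Rightarrow> nat" where
  "rG n E v w = Min {i. w < i \<and> {i, v} \<in> hat_edges n E}"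

definition xiG :: "nat \<Rightarrow> nat set set \<Rightarrow> nat \<Rightarrow> nat \<Rightarrow> nat set" where
  "xiG n E v w = {ellG n E v w, v, w, rG n E v w}"

definition Xi :: "nat \<Rightarrow> nat set set \<Rightarrow> nat set set" where
  "Xi n E = {xiG n E v w | v w. v < w \<and> {v, w} \<in> E}"

end

theory Submission imports Defs begin

lemma pX: "persistent n E \<Longrightarrow> a < b \<Longrightarrow> b < c \<Longrightarrow> c < d \<Longrightarrow> {a, c} \<in> E \<Longrightarrow> {b, d} \<in> E \<Longrightarrow> {a, d} \<in> E"
  unfolding persistent_def by blast

lemma pbar: "persistent n E \<Longrightarrow> {a, b} \<in> E \<Longrightarrow> a + 1 < b \<Longrightarrow> \<exists>x. a < x \<and> x < b \<and> {a, x} \<in> E \<and> {x, b} \<in> E"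
  unfolding persistent_def by blast

lemma ppath: "persistent n E \<Longrightarrow> 1 \<le> i \<Longrightarrow> i < n \<Longrightarrow> {i, i + 1} \<in> E"
  unfolding persistent_def by blast

lemma prange: assumes "persistent n E" "{a, b} \<in> E"
  shows "a \<noteq> b \<and> 1 \<le> a \<and> a \<le> n \<and> 1 \<le> b \<and> b \<le> n"
proof -
  from assms have "is_graph n E" unfolding persistent_def by blast
  then obtain u v where "{a,b} = {u,v}" "u \<noteq> v" "u \<in> {1..n}" "v \<in> {1..n}"
    using assms(2) unfolding is_graph_def by blast
  then show ?thesis by (auto simp: doubleton_eq_iff)
qed

lemma hat_iff: assumes "i < j"
  shows "{i, j} \<in> hat_edges n E \<longleftrightarrow> {i, j} \<in> E \<or> (i = 0 \<and> j \<le> n + 1) \<or> j = n + 1"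
proof
  assume "{i, j} \<in> hat_edges n E"
  then show "{i, j} \<in> E \<or> (i = 0 \<and> j \<le> n + 1) \<or> j = n + 1"
    unfolding hat_edges_def using assms by (auto simp: doubleton_eq_iff)
next
  assume "{i, j} \<in> E \<or> (i = 0 \<and> j \<le> n + 1) \<or> j = n + 1"
  then show "{i, j} \<in> hat_edges n E"
  proof (elim disjE)
    assume "i = 0 \<and> j \<le> n + 1" then show ?thesis unfolding hat_edges_def using assms by blast
  next
    assume "j = n + 1" then have "{i, j} = {j, i}" "i \<le> n + 1" using assms by auto
    then show ?thesis unfolding hat_edges_def using assms \<open>j = n+1\<close> by blast
  qed (simp add: hat_edges_def)
qed

lemma hat_E: "i < j \<Longrightarrow> 1 \<le> i \<Longrightarrow> j \<le> n \<Longrightarrow> {i, j} \<in> hat_edges n E \<longleftrightarrow> {i, j} \<in> E"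
  using hat_iff by auto

lemma hat_bound: assumes P: "persistent n E" and "{i, j} \<in> hat_edges n E" shows "i \<le> n + 1"
proof (cases "{i, j} \<in> E")
  case True then show ?thesis using prange[OF P True] by auto
next
  case False then show ?thesis using assms(2) unfolding hat_edges_def by (auto simp: doubleton_eq_iff)
qed

lemma ell_props: assumes P: "persistent n E" and "v < w" "{v, w} \<in> E"
  shows "ellG n E v w < v \<and> {ellG n E v w, w} \<in> hat_edges n E \<and>
         (\<forall>i. ellG n E v w < i \<and> i < v \<longrightarrow> {i, w} \<notin> hat_edges n E)"
proof -
  let ?A = "{i. i < v \<and> {i, w} \<in> hat_edges n E}"
  have w: "w \<le> n" using prange[OF P assms(3)] by auto
  have fin: "finite ?A" by (rule finite_subset[of _ "{..<v}"]) auto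
  have "0 < v" using prange[OF P assms(3)] by auto
  then have "0 \<in> ?A" using hat_iff[of 0 w n E] w assms by auto
  then have ne: "?A \<noteq> {}" by blast
  have eq: "ellG n E v w = Max ?A" unfolding ellG_def by (rule refl)
  have "Max ?A \<in> ?A" using Max_in[OF fin ne] .
  then have 1: "Max ?A < v" "{Max ?A, w} \<in> hat_edges n E" by auto
  have 2: "\<forall>i. Max ?A < i \<and> i < v \<longrightarrow> {i, w} \<notin> hat_edges n E"
  proof (intro allI impI notI)
    fix i assume "Max ?A < i \<and> i < v" "{i, w} \<in> hat_edges n E"
    then have "i \<in> ?A" by auto
    then have "i \<le> Max ?A" using Max_ge[OF fin] by blast
    then show False using \<open>Max ?A < i \<and> i < v\<close> by linarith
  qed
  show ?thesis unfolding eq using 1 2 by blast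
qed

lemma r_props: assumes P: "persistent n E" and "v < w" "{v, w} \<in> E"
  shows "w < rG n E v w \<and> rG n E v w \<le> n + 1 \<and> {v, rG n E v w} \<in> hat_edges n E \<and>
         (\<forall>i. w < i \<and> i < rG n E v w \<longrightarrow> {v, i} \<notin> hat_edges n E)"
proof -
  let ?A = "{i. w < i \<and> {i, v} \<in> hat_edges n E}"
  have w: "w \<le> n" using prange[OF P assms(3)] by auto
  have "n + 1 \<in> ?A" using hat_iff[of v "n+1" n E] w assms by (auto simp: insert_commute)
  then have ne: "?A \<noteq> {}" by blast
  have fin: "finite ?A" by (rule finite_subset[of _ "{..n+1}"]) (use hat_bound[OF P] in auto)
  have eq: "rG n E v w = Min ?A" unfolding rG_def by (rule refl)
  have "Min ?A \<in> ?A" using Min_in[OF fin ne] .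
  then have 1: "w < Min ?A" "{v, Min ?A} \<in> hat_edges n E" by (auto simp: insert_commute)
  have 2: "\<forall>i. w < i \<and> i < Min ?A \<longrightarrow> {v, i} \<notin> hat_edges n E"
  proof (intro allI impI notI)
    fix i assume "w < i \<and> i < Min ?A" "{v, i} \<in> hat_edges n E"
    then have "i \<in> ?A" by (auto simp: insert_commute)
    then have "Min ?A \<le> i" using Min_le[OF fin] by blast
    then show False using \<open>w < i \<and> i < Min ?A\<close> by linarith
  qed
  have 3: "Min ?A \<le> n + 1" using Min_le[OF fin \<open>n+1 \<in> ?A\<close>] .
  show ?thesis unfolding eq using 1 2 3 by blast
qed

lemma ell_eq: assumes "x < v" "{x, w} \<in> hat_edges n E" "\<forall>i. x < i \<and> i < v \<longrightarrow> {i, w} \<notin> hat_edges n E"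
  shows "ellG n E v w = x"
proof -
  let ?A = "{i. i < v \<and> {i, w} \<in> hat_edges n E}"
  have fin: "finite ?A" by (rule finite_subset[of _ "{..<v}"]) auto
  have xin: "x \<in> ?A" using assms by blast
  have le: "\<And>y. y \<in> ?A \<Longrightarrow> y \<le> x"
  proof -
    fix y assume "y \<in> ?A"
    then have "y < v" "{y, w} \<in> hat_edges n E" by auto
    then show "y \<le> x" using assms(3) by (meson not_le)
  qed
  have "Max ?A = x" using Max_eqI[OF fin le xin] .
  then show ?thesis unfolding ellG_def .
qed

lemma r_eq: assumes P: "persistent n E" and "w < y" "{v, y} \<in> hat_edges n E" "\<forall>i. w < i \<and> i < y \<longrightarrow> {v, i} \<notin> hat_edges n E"
  shows "rG n E v w = y"
proof -
  let ?A = "{i. w < i \<and> {i, v} \<in> hat_edges n E}"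
  have yin: "y \<in> ?A" using assms by (simp add: insert_commute)
  have le: "\<And>z. z \<in> ?A \<Longrightarrow> y \<le> z"
  proof -
    fix z assume "z \<in> ?A"
    then have "w < z" "{v, z} \<in> hat_edges n E" by (auto simp: insert_commute)
    then show "y \<le> z" using assms(4) by (meson not_le)
  qed
  have fin: "finite ?A" by (rule finite_subset[of _ "{..n+1}"]) (use hat_bound[OF P] in auto)
  have "Min ?A = y" using Min_eqI[OF fin le yin] .
  then show ?thesis unfolding rG_def .
qed

lemma in_Xi: "v < w \<Longrightarrow> {v, w} \<in> E \<Longrightarrow> xiG n E v w \<in> Xi n E"
  unfolding Xi_def by blast

lemma ex_max: assumes "P (i::nat)" "\<forall>j. P j \<longrightarrow> j < b" shows "\<exists>m. P m \<and> (\<forall>j. P j \<longrightarrow> j \<le> m)"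
proof -
  have fin: "finite {j. P j}" by (rule finite_subset[of _ "{..<b}"]) (use assms in auto)
  have "{j. P j} \<noteq> {}" using assms(1) by blast
  then have "P (Max {j. P j})" using Max_in[OF fin] by blast
  moreover have "\<forall>j. P j \<longrightarrow> j \<le> Max {j. P j}" using Max_ge[OF fin] by blast
  ultimately show ?thesis by blast
qed

lemma ex_min: assumes "P (i::nat)" shows "\<exists>m. P m \<and> (\<forall>j. P j \<longrightarrow> m \<le> j)"
proof (intro exI conjI allI impI)
  show "P (LEAST j. P j)" using assms by (rule LeastI)
  fix j assume "P j" then show "(LEAST j. P j) \<le> j" by (rule Least_le)
qed


lemma E_hat: "e \<in> E \<Longrightarrow> e \<in> hat_edges n E"
  unfolding hat_edges_def by blast

context
  fixes n :: nat and E :: "nat set set" and v w :: nat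
  assumes P: "persistent n E" and vw: "v < w" and Evw: "{v, w} \<in> E"
begin

abbreviation "L \<equiv> ellG n E v w"
abbreviation "R \<equiv> rG n E v w"

lemma v1: "1 \<le> v" and wn: "w \<le> n"
  using prange[OF P Evw] by auto

lemma Lprops: "L < v" "{L, w} \<in> hat_edges n E" "L < i \<Longrightarrow> i < v \<Longrightarrow> {i, w} \<notin> E"
  using ell_props[OF P vw Evw] E_hat by blast+

lemma Rprops: "w < R" "R \<le> n + 1" "{v, R} \<in> hat_edges n E" "w < i \<Longrightarrow> i < R \<Longrightarrow> {v, i} \<notin> E"
  using r_props[OF P vw Evw] E_hat by blast+

lemma L_E: "0 < L \<Longrightarrow> {L, w} \<in> E"
  using Lprops(1,2) hat_iff[of L w n E] vw wn by auto

lemma R_E: "R \<le> n \<Longrightarrow> {v, R} \<in> E"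
  using Rprops(1,3) hat_iff[of v R n E] vw v1 by auto

lemma LR_E: "0 < L \<Longrightarrow> R \<le> n \<Longrightarrow> {L, R} \<in> E"
  using pX[OF P Lprops(1) vw Rprops(1) L_E R_E] by blast

lemma LR_hat: "{L, R} \<in> hat_edges n E"
proof (cases "0 < L \<and> R \<le> n")
  case True then show ?thesis using LR_E E_hat by blast
next
  case False
  have "L < R" using Lprops(1) vw Rprops(1) by linarith
  then show ?thesis using False Rprops(2) hat_iff[of L R n E] by auto
qed

lemma span: "{i, x} \<in> E \<Longrightarrow> L < i \<Longrightarrow> i < v \<Longrightarrow> w < x \<Longrightarrow> x < R \<Longrightarrow> False"
proof (induction "x - i" arbitrary: i x rule: less_induct)
  case (less i x)
  have "i + 1 < x" using less.prems vw by linarith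
  then obtain y where y: "i < y" "y < x" "{i, y} \<in> E" "{y, x} \<in> E" using pbar[OF P less.prems(1)] by blast
  consider "y < v" | "y = v" | "v < y \<and> y < w" | "y = w" | "w < y" by linarith
  then show False
  proof cases
    case 1
    have "x - y < x - i" using y by linarith
    then show False using less.hyps[of x y] less.prems y 1 by auto
  next
    case 2 then show False using Rprops(4)[of x] less.prems y by auto
  next
    case 3 then have "{v, x} \<in> E" using pX[OF P _ _ _ Evw y(4)] less.prems by auto
    then show False using Rprops(4)[of x] less.prems by auto
  next
    case 4 then show False using Lprops(3)[of i] less.prems y by auto
  next
    case 5
    have "y - i < x - i" using y by linarith
    then show False using less.hyps[of y i] less.prems y 5 by auto
  qed
qed

lemma W: assumes "R \<le> n" shows "{w, R} \<in> E"
proof -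
  have "v \<le> v \<and> v < w \<and> {v, R} \<in> E" using R_E assms vw by auto
  then obtain m where m: "v \<le> m \<and> m < w \<and> {m, R} \<in> E"
    and mmax: "\<forall>j. v \<le> j \<and> j < w \<and> {j, R} \<in> E \<longrightarrow> j \<le> m"
    using ex_max[of "\<lambda>j. v \<le> j \<and> j < w \<and> {j, R} \<in> E" v w] by blast
  have "m + 1 < R" using m Rprops(1) by linarith
  then obtain z where z: "m < z" "z < R" "{m, z} \<in> E" "{z, R} \<in> E" using pbar[OF P] m by blast
  consider "z < w" | "z = w" | "w < z" by linarith
  then show ?thesis
  proof cases
    case 1 then show ?thesis using mmax[rule_format, of z] z m by auto
  next
    case 2 then show ?thesis using z by simp
  next
    case 3
    have "{v, z} \<in> E"
    proof (cases "m = v")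
      case True then show ?thesis using z by simp
    next
      case False then show ?thesis using pX[OF P _ _ 3 Evw z(3)] m by auto
    qed
    then show ?thesis using Rprops(4)[of z] 3 z by auto
  qed
qed

lemma W': assumes "0 < L" shows "{L, v} \<in> E"
proof -
  have "v < w \<and> w \<le> w \<and> {L, w} \<in> E" using L_E assms vw by auto
  then obtain m where m: "v < m \<and> m \<le> w \<and> {L, m} \<in> E"
    and mmin: "\<forall>j. v < j \<and> j \<le> w \<and> {L, j} \<in> E \<longrightarrow> m \<le> j"
    using ex_min[of "\<lambda>j. v < j \<and> j \<le> w \<and> {L, j} \<in> E" w] by blast
  have "L + 1 < m" using m Lprops(1) by linarith
  then obtain z where z: "L < z" "z < m" "{L, z} \<in> E" "{z, m} \<in> E" using pbar[OF P] m by blast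
  consider "z < v" | "z = v" | "v < z" by linarith
  then show ?thesis
  proof cases
    case 3 then show ?thesis using mmin[rule_format, of z] z m by auto
  next
    case 2 then show ?thesis using z by simp
  next
    case 1
    have "{z, w} \<in> E"
    proof (cases "m = w")
      case True then show ?thesis using z by simp
    next
      case False then show ?thesis using pX[OF P 1 _ _ z(4) Evw] m by auto
    qed
    then show ?thesis using Lprops(3)[of z] 1 z by auto
  qed
qed

lemma case0: assumes nf: "{v, w, R} \<notin> cyclic_faces2 n"
  shows "\<exists>S'\<in>Xi n E. S' \<noteq> {L, v, w, R} \<and> {v, w, R} \<subseteq> S'"
proof -
  have key: "(\<exists>x. v < x \<and> x < w \<and> {x, w} \<in> E \<and> (\<forall>i. v < i \<and> i < x \<longrightarrow> {i, w} \<notin> E) \<and> {x, R} \<in> hat_edges n E)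
     \<or> (R \<le> n \<and> {w, R} \<in> E \<and> (\<forall>i. v < i \<and> i < w \<longrightarrow> {i, R} \<notin> E))"
  proof (cases "R = n + 1")
    case True
    have "w \<noteq> v + 1"
    proof
      assume "w = v + 1"
      then have "{v, w, R} = {w - 1, w, n + 1} \<and> 0 < w \<and> w < n + 1" using True wn vw by auto
      then have "{v, w, R} \<in> cyclic_faces2 n" unfolding cyclic_faces2_def by blast
      then show False using nf by blast
    qed
    then have "v + 1 < w" using vw by linarith
    then obtain y where y: "v < y" "y < w" "{y, w} \<in> E" using pbar[OF P Evw] by blast
    obtain x where x: "v < x \<and> x < w \<and> {x, w} \<in> E" and xmin: "\<forall>j. v < j \<and> j < w \<and> {j, w} \<in> E \<longrightarrow> x \<le> j"
      using ex_min[of "\<lambda>j. v < j \<and> j < w \<and> {j, w} \<in> E" y] y by blast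
    have "{x, R} \<in> hat_edges n E" using hat_iff[of x R n E] True x wn by auto
    moreover have "\<forall>i. v < i \<and> i < x \<longrightarrow> {i, w} \<notin> E" using xmin x by fastforce
    ultimately show ?thesis using x by blast
  next
    case False
    then have Rn: "R \<le> n" using Rprops(2) by linarith
    show ?thesis
    proof (cases "\<forall>i. v < i \<and> i < w \<longrightarrow> {i, R} \<notin> E")
      case True then show ?thesis using Rn W by blast
    next
      case False
      then obtain i0 where i0: "v < i0 \<and> i0 < w \<and> {i0, R} \<in> E" by blast
      obtain m where m: "v < m \<and> m < w \<and> {m, R} \<in> E" and mmax: "\<forall>j. v < j \<and> j < w \<and> {j, R} \<in> E \<longrightarrow> j \<le> m"
        using ex_max[of "\<lambda>j. v < j \<and> j < w \<and> {j, R} \<in> E" i0 w] i0 by blast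
      have "m + 1 < R" using m Rprops(1) by linarith
      then obtain z where z: "m < z" "z < R" "{m, z} \<in> E" "{z, R} \<in> E" using pbar[OF P] m by blast
      have zw: "z = w"
      proof (rule ccontr)
        assume "z \<noteq> w"
        then consider "z < w" | "w < z" by linarith
        then show False
        proof cases
          case 1 then show False using mmax[rule_format, of z] z m by auto
        next
          case 2
          have "{v, z} \<in> E" using pX[OF P _ _ 2 Evw z(3)] m by auto
          then show False using Rprops(4)[of z] 2 z by auto
        qed
      qed
      then have mw: "{m, w} \<in> E" using z by simp
      obtain x where x: "v < x \<and> x < w \<and> {x, w} \<in> E" and xmin: "\<forall>j. v < j \<and> j < w \<and> {j, w} \<in> E \<longrightarrow> x \<le> j"
        using ex_min[of "\<lambda>j. v < j \<and> j < w \<and> {j, w} \<in> E" m] m mw by blast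
      have "x \<le> m" using xmin m mw by blast
      have "{x, R} \<in> E"
      proof (cases "x = m")
        case True then show ?thesis using m by simp
      next
        case False
        then have "x < m" using \<open>x \<le> m\<close> by linarith
        then show ?thesis using pX[OF P \<open>x < m\<close> _ Rprops(1)] m x by auto
      qed
      moreover have "\<forall>i. v < i \<and> i < x \<longrightarrow> {i, w} \<notin> E" using xmin x by fastforce
      ultimately show ?thesis using x E_hat by blast
    qed
  qed
  from key show ?thesis
  proof (elim disjE conjE exE)
    fix x assume x: "v < x" "x < w" "{x, w} \<in> E" "\<forall>i. v < i \<and> i < x \<longrightarrow> {i, w} \<notin> E" "{x, R} \<in> hat_edges n E"
    have "ellG n E x w = v"
    proof (rule ell_eq)
      show "v < x" "{v, w} \<in> hat_edges n E" using x Evw E_hat by auto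
      show "\<forall>i. v < i \<and> i < x \<longrightarrow> {i, w} \<notin> hat_edges n E"
      proof (intro allI impI)
        fix i assume i: "v < i \<and> i < x"
        then have "{i, w} \<notin> E" using x by blast
        moreover have "i < w" "1 \<le> i" using i x v1 by auto
        ultimately show "{i, w} \<notin> hat_edges n E" using hat_E[of i w n E] wn by blast
      qed
    qed
    moreover have "rG n E x w = R"
    proof (rule r_eq[OF P])
      show "w < R" "{x, R} \<in> hat_edges n E" using x Rprops by auto
      show "\<forall>i. w < i \<and> i < R \<longrightarrow> {x, i} \<notin> hat_edges n E"
      proof (intro allI impI notI)
        fix i assume i: "w < i \<and> i < R" "{x, i} \<in> hat_edges n E"
        have "1 \<le> x" "i \<le> n" using x v1 i Rprops(2) by auto
        then have "{x, i} \<in> E" using hat_E[of x i n E] i x by auto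
        then have "{v, i} \<in> E" using pX[OF P x(1) x(2) _ Evw] i by auto
        then show False using Rprops(4)[of i] i by auto
      qed
    qed
    ultimately have eq: "xiG n E x w = {v, x, w, R}" unfolding xiG_def by simp
    have "x \<notin> {L, v, w, R}" using x Lprops(1) vw Rprops(1) by auto
    then show ?thesis using in_Xi[OF x(2) x(3), of n] eq by (intro bexI[of _ "xiG n E x w"]) auto
  next
    assume B: "R \<le> n" "{w, R} \<in> E" "\<forall>i. v < i \<and> i < w \<longrightarrow> {i, R} \<notin> E"
    have "ellG n E w R = v"
    proof (rule ell_eq)
      show "v < w" "{v, R} \<in> hat_edges n E" using vw Rprops by auto
      show "\<forall>i. v < i \<and> i < w \<longrightarrow> {i, R} \<notin> hat_edges n E"
      proof (intro allI impI)
        fix i assume i: "v < i \<and> i < w"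
        then have "{i, R} \<notin> E" using B by blast
        moreover have "i < R" "1 \<le> i" using i Rprops(1) v1 by auto
        ultimately show "{i, R} \<notin> hat_edges n E" using hat_E[of i R n E] B(1) by blast
      qed
    qed
    moreover have "R < rG n E w R" using r_props[OF P Rprops(1) B(2)] by blast
    ultimately have eq: "xiG n E w R = {v, w, R, rG n E w R}" unfolding xiG_def by simp
    have "rG n E w R \<notin> {L, v, w, R}" using \<open>R < rG n E w R\<close> Lprops(1) vw Rprops(1) by auto
    then show ?thesis using in_Xi[OF Rprops(1) B(2), of n] eq by (intro bexI[of _ "xiG n E w R"]) auto
  qed
qed

lemma case3: assumes nf: "{L, v, w} \<notin> cyclic_faces2 n"
  shows "\<exists>S'\<in>Xi n E. S' \<noteq> {L, v, w, R} \<and> {L, v, w} \<subseteq> S'"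
proof -
  have key: "(\<exists>x. v < x \<and> x < w \<and> {v, x} \<in> E \<and> (\<forall>i. x < i \<and> i < w \<longrightarrow> {v, i} \<notin> E) \<and> {L, x} \<in> hat_edges n E)
     \<or> (0 < L \<and> {L, v} \<in> E \<and> (\<forall>i. v < i \<and> i < w \<longrightarrow> {L, i} \<notin> E))"
  proof (cases "L = 0")
    case True
    have "w \<noteq> v + 1"
    proof
      assume "w = v + 1"
      then have "{L, v, w} = {0, v, v + 1} \<and> 0 < v \<and> v < n + 1" using True wn vw v1 by auto
      then have "{L, v, w} \<in> cyclic_faces2 n" unfolding cyclic_faces2_def by blast
      then show False using nf by blast
    qed
    then have "v + 1 < w" using vw by linarith
    then obtain y where y: "v < y" "y < w" "{v, y} \<in> E" using pbar[OF P Evw] by blast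
    obtain x where x: "v < x \<and> x < w \<and> {v, x} \<in> E" and xmax: "\<forall>j. v < j \<and> j < w \<and> {v, j} \<in> E \<longrightarrow> j \<le> x"
      using ex_max[of "\<lambda>j. v < j \<and> j < w \<and> {v, j} \<in> E" y w] y by blast
    have "{L, x} \<in> hat_edges n E" using hat_iff[of 0 x n E] True x wn by auto
    moreover have "\<forall>i. x < i \<and> i < w \<longrightarrow> {v, i} \<notin> E"
    proof (intro allI impI notI)
      fix i assume i: "x < i \<and> i < w" "{v, i} \<in> E"
      then have "i \<le> x" using xmax x by auto
      then show False using i by linarith
    qed
    ultimately show ?thesis using x by blast
  next
    case False
    then have L0: "0 < L" by simp
    show ?thesis
    proof (cases "\<forall>i. v < i \<and> i < w \<longrightarrow> {L, i} \<notin> E")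
      case True then show ?thesis using L0 W' by blast
    next
      case False
      then obtain i0 where i0: "v < i0 \<and> i0 < w \<and> {L, i0} \<in> E" by blast
      obtain m where m: "v < m \<and> m < w \<and> {L, m} \<in> E" and mmin: "\<forall>j. v < j \<and> j < w \<and> {L, j} \<in> E \<longrightarrow> m \<le> j"
        using ex_min[of "\<lambda>j. v < j \<and> j < w \<and> {L, j} \<in> E" i0] i0 by blast
      have "L + 1 < m" using m Lprops(1) by linarith
      then obtain z where z: "L < z" "z < m" "{L, z} \<in> E" "{z, m} \<in> E" using pbar[OF P] m by blast
      have zv: "z = v"
      proof (rule ccontr)
        assume "z \<noteq> v"
        then consider "v < z" | "z < v" by linarith
        then show False
        proof cases
          case 1 then show False using mmin[rule_format, of z] z m by auto
        next
          case 2
          have "{z, w} \<in> E" using pX[OF P 2 _ _ z(4) Evw] m by auto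
          then show False using Lprops(3)[of z] 2 z by auto
        qed
      qed
      then have mv: "{v, m} \<in> E" using z by simp
      obtain x where x: "v < x \<and> x < w \<and> {v, x} \<in> E" and xmax: "\<forall>j. v < j \<and> j < w \<and> {v, j} \<in> E \<longrightarrow> j \<le> x"
        using ex_max[of "\<lambda>j. v < j \<and> j < w \<and> {v, j} \<in> E" m w] m mv by blast
      have "m \<le> x" using xmax m mv by blast
      have "{L, x} \<in> E"
      proof (cases "x = m")
        case True then show ?thesis using m by simp
      next
        case False
        then have "m < x" using \<open>m \<le> x\<close> by linarith
        then show ?thesis using pX[OF P Lprops(1) _ \<open>m < x\<close>] m x by auto
      qed
      moreover have "\<forall>i. x < i \<and> i < w \<longrightarrow> {v, i} \<notin> E"
    proof (intro allI impI notI)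
      fix i assume i: "x < i \<and> i < w" "{v, i} \<in> E"
      then have "i \<le> x" using xmax x by auto
      then show False using i by linarith
    qed
      ultimately show ?thesis using x E_hat by blast
    qed
  qed
  from key show ?thesis
  proof (elim disjE conjE exE)
    fix x assume x: "v < x" "x < w" "{v, x} \<in> E" "\<forall>i. x < i \<and> i < w \<longrightarrow> {v, i} \<notin> E" "{L, x} \<in> hat_edges n E"
    have "ellG n E v x = L"
    proof (rule ell_eq)
      show "L < v" "{L, x} \<in> hat_edges n E" using x Lprops by auto
      show "\<forall>i. L < i \<and> i < v \<longrightarrow> {i, x} \<notin> hat_edges n E"
      proof (intro allI impI notI)
        fix i assume i: "L < i \<and> i < v" "{i, x} \<in> hat_edges n E"
        have "1 \<le> i" "x \<le> n" "i < x" using x wn i vw by auto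
        then have "{i, x} \<in> E" using hat_E[of i x n E] i by auto
        then have "{i, w} \<in> E" using pX[OF P _ x(1) x(2) _ Evw] i by auto
        then show False using Lprops(3)[of i] i by auto
      qed
    qed
    moreover have "rG n E v x = w"
    proof (rule r_eq[OF P])
      show "x < w" "{v, w} \<in> hat_edges n E" using x Evw E_hat by auto
      show "\<forall>i. x < i \<and> i < w \<longrightarrow> {v, i} \<notin> hat_edges n E"
      proof (intro allI impI)
        fix i assume i: "x < i \<and> i < w"
        then have "{v, i} \<notin> E" using x by blast
        moreover have "v < i" "i \<le> n" using i x wn by auto
        ultimately show "{v, i} \<notin> hat_edges n E" using hat_E[of v i n E] v1 by blast
      qed
    qed
    ultimately have eq: "xiG n E v x = {L, v, x, w}" unfolding xiG_def by simp
    have "x \<notin> {L, v, w, R}" using x Lprops(1) vw Rprops(1) by auto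
    then show ?thesis using in_Xi[OF x(1) x(3), of n] eq by (intro bexI[of _ "xiG n E v x"]) auto
  next
    assume B: "0 < L" "{L, v} \<in> E" "\<forall>i. v < i \<and> i < w \<longrightarrow> {L, i} \<notin> E"
    have "rG n E L v = w"
    proof (rule r_eq[OF P])
      show "v < w" "{L, w} \<in> hat_edges n E" using vw Lprops by auto
      show "\<forall>i. v < i \<and> i < w \<longrightarrow> {L, i} \<notin> hat_edges n E"
      proof (intro allI impI)
        fix i assume i: "v < i \<and> i < w"
        then have "{L, i} \<notin> E" using B by blast
        moreover have "L < i" "i \<le> n" using i Lprops(1) wn by auto
        ultimately show "{L, i} \<notin> hat_edges n E" using hat_E[of L i n E] B(1) by auto
      qed
    qed
    moreover have "ellG n E L v < L" using ell_props[OF P Lprops(1) B(2)] by blast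
    ultimately have eq: "xiG n E L v = {ellG n E L v, L, v, w}" unfolding xiG_def by simp
    have "ellG n E L v \<notin> {L, v, w, R}" using \<open>ellG n E L v < L\<close> Lprops(1) vw Rprops(1) by auto
    then show ?thesis using in_Xi[OF Lprops(1) B(2), of n] eq by (intro bexI[of _ "xiG n E L v"]) auto
  qed
qed

lemma case1: assumes nf: "{L, w, R} \<notin> cyclic_faces2 n"
  shows "\<exists>S'\<in>Xi n E. S' \<noteq> {L, v, w, R} \<and> {L, w, R} \<subseteq> S'"
proof -
  have key: "(0 < L \<and> (\<forall>i. w < i \<and> i < R \<longrightarrow> {L, i} \<notin> E))
     \<or> (\<exists>x. w < x \<and> x < R \<and> {w, x} \<in> E \<and> (\<forall>i. x < i \<and> i < R \<longrightarrow> {w, i} \<notin> E) \<and> {L, x} \<in> hat_edges n E)"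
  proof (cases "L = 0")
    case True
    have "R \<noteq> w + 1"
    proof
      assume "R = w + 1"
      then have "{L, w, R} = {0, w, w + 1} \<and> 0 < w \<and> w < n + 1" using True wn vw by auto
      then have "{L, w, R} \<in> cyclic_faces2 n" unfolding cyclic_faces2_def by blast
      then show False using nf by blast
    qed
    then have "w + 1 < R" using Rprops(1) by linarith
    then have y: "w < w + 1" "w + 1 < R" "{w, w + 1} \<in> E" using ppath[OF P, of w] Rprops(2) vw by auto
    obtain x where x: "w < x \<and> x < R \<and> {w, x} \<in> E" and xmax: "\<forall>j. w < j \<and> j < R \<and> {w, j} \<in> E \<longrightarrow> j \<le> x"
      using ex_max[of "\<lambda>j. w < j \<and> j < R \<and> {w, j} \<in> E" "w + 1" R] y by blast
    have "{L, x} \<in> hat_edges n E" using hat_iff[of 0 x n E] True x Rprops(2) by auto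
    moreover have "\<forall>i. x < i \<and> i < R \<longrightarrow> {w, i} \<notin> E"
    proof (intro allI impI notI)
      fix i assume i: "x < i \<and> i < R" "{w, i} \<in> E"
      then have "i \<le> x" using xmax x by auto
      then show False using i by linarith
    qed
    ultimately show ?thesis using x by blast
  next
    case False
    then have L0: "0 < L" by simp
    show ?thesis
    proof (cases "\<forall>i. w < i \<and> i < R \<longrightarrow> {L, i} \<notin> E")
      case True then show ?thesis using L0 by blast
    next
      case False
      then obtain i0 where i0: "w < i0 \<and> i0 < R \<and> {L, i0} \<in> E" by blast
      obtain m where m: "w < m \<and> m < R \<and> {L, m} \<in> E" and mmin: "\<forall>j. w < j \<and> j < R \<and> {L, j} \<in> E \<longrightarrow> m \<le> j"
        using ex_min[of "\<lambda>j. w < j \<and> j < R \<and> {L, j} \<in> E" i0] i0 by blast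
      have "L + 1 < m" using m Lprops(1) vw by linarith
      then obtain z where z: "L < z" "z < m" "{L, z} \<in> E" "{z, m} \<in> E" using pbar[OF P] m by blast
      have zw: "z = w"
      proof (rule ccontr)
        assume "z \<noteq> w"
        then consider "w < z" | "v < z \<and> z < w" | "z = v" | "z < v" by linarith
        then show False
        proof cases
          case 1 then show False using mmin[rule_format, of z] z m by auto
        next
          case 2
          have "{v, m} \<in> E" using pX[OF P _ _ _ Evw z(4)] 2 m by auto
          then show False using Rprops(4)[of m] m by auto
        next
          case 3 then show False using Rprops(4)[of m] m z by auto
        next
          case 4 then show False using span[of z m] z m by auto
        qed
      qed
      then have mw: "{w, m} \<in> E" using z by simp
      obtain x where x: "w < x \<and> x < R \<and> {w, x} \<in> E" and xmax: "\<forall>j. w < j \<and> j < R \<and> {w, j} \<in> E \<longrightarrow> j \<le> x"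
        using ex_max[of "\<lambda>j. w < j \<and> j < R \<and> {w, j} \<in> E" m R] m mw by blast
      have "m \<le> x" using xmax m mw by blast
      have "{L, x} \<in> E"
      proof (cases "x = m")
        case True then show ?thesis using m by simp
      next
        case False
        then have "m < x" using \<open>m \<le> x\<close> by linarith
        have "L < w" using Lprops(1) vw by linarith
        then show ?thesis using pX[OF P \<open>L < w\<close> _ \<open>m < x\<close>] m x by auto
      qed
      moreover have "\<forall>i. x < i \<and> i < R \<longrightarrow> {w, i} \<notin> E"
      proof (intro allI impI notI)
        fix i assume i: "x < i \<and> i < R" "{w, i} \<in> E"
        then have "i \<le> x" using xmax x by auto
        then show False using i by linarith
      qed
      ultimately show ?thesis using x E_hat by blast
    qed
  qed
  from key show ?thesis
  proof (elim disjE conjE exE)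
    assume A: "0 < L" "\<forall>i. w < i \<and> i < R \<longrightarrow> {L, i} \<notin> E"
    have Lw: "L < w" using Lprops(1) vw by linarith
    have "rG n E L w = R"
    proof (rule r_eq[OF P])
      show "w < R" "{L, R} \<in> hat_edges n E" using Rprops(1) LR_hat by auto
      show "\<forall>i. w < i \<and> i < R \<longrightarrow> {L, i} \<notin> hat_edges n E"
      proof (intro allI impI)
        fix i assume i: "w < i \<and> i < R"
        then have "{L, i} \<notin> E" using A by blast
        moreover have "L < i" "i \<le> n" using i Lw Rprops(2) by auto
        ultimately show "{L, i} \<notin> hat_edges n E" using hat_E[of L i n E] A(1) by auto
      qed
    qed
    moreover have "ellG n E L w < L" using ell_props[OF P Lw L_E[OF A(1)]] by blast
    ultimately have eq: "xiG n E L w = {ellG n E L w, L, w, R}" unfolding xiG_def by simp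
    have "ellG n E L w \<notin> {L, v, w, R}" using \<open>ellG n E L w < L\<close> Lprops(1) vw Rprops(1) by auto
    then show ?thesis using in_Xi[OF Lw L_E[OF A(1)], of n] eq by (intro bexI[of _ "xiG n E L w"]) auto
  next
    fix x assume x: "w < x" "x < R" "{w, x} \<in> E" "\<forall>i. x < i \<and> i < R \<longrightarrow> {w, i} \<notin> E" "{L, x} \<in> hat_edges n E"
    have "ellG n E w x = L"
    proof (rule ell_eq)
      show "L < w" "{L, x} \<in> hat_edges n E" using x Lprops(1) vw by auto
      show "\<forall>i. L < i \<and> i < w \<longrightarrow> {i, x} \<notin> hat_edges n E"
      proof (intro allI impI notI)
        fix i assume i: "L < i \<and> i < w" "{i, x} \<in> hat_edges n E"
        have "1 \<le> i" "x \<le> n" "i < x" using x i Rprops(2) by auto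
        then have ix: "{i, x} \<in> E" using hat_E[of i x n E] i by auto
        consider "i < v" | "i = v" | "v < i" by linarith
        then show False
        proof cases
          case 1 then show False using span[OF ix] i x by auto
        next
          case 2 then show False using Rprops(4)[of x] ix x by auto
        next
          case 3
          have "{v, x} \<in> E" using pX[OF P 3 _ x(1) Evw ix] i by auto
          then show False using Rprops(4)[of x] x by auto
        qed
      qed
    qed
    moreover have "rG n E w x = R"
    proof (rule r_eq[OF P])
      have "{w, R} \<in> hat_edges n E"
      proof (cases "R \<le> n")
        case True then show ?thesis using W E_hat by blast
      next
        case False then have "R = n + 1" using Rprops(2) by linarith
        then show ?thesis using hat_iff[of w R n E] Rprops(1) by auto
      qed
      then show "x < R" "{w, R} \<in> hat_edges n E" using x by auto
      show "\<forall>i. x < i \<and> i < R \<longrightarrow> {w, i} \<notin> hat_edges n E"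
      proof (intro allI impI)
        fix i assume i: "x < i \<and> i < R"
        then have "{w, i} \<notin> E" using x by blast
        moreover have "w < i" "i \<le> n" "1 \<le> w" using i x Rprops(2) v1 vw by auto
        ultimately show "{w, i} \<notin> hat_edges n E" using hat_E[of w i n E] by blast
      qed
    qed
    ultimately have eq: "xiG n E w x = {L, w, x, R}" unfolding xiG_def by simp
    have "x \<notin> {L, v, w, R}" using x Lprops(1) vw Rprops(1) by auto
    then show ?thesis using in_Xi[OF x(1) x(3), of n] eq by (intro bexI[of _ "xiG n E w x"]) auto
  qed
qed

lemma case2: assumes nf: "{L, v, R} \<notin> cyclic_faces2 n"
  shows "\<exists>S'\<in>Xi n E. S' \<noteq> {L, v, w, R} \<and> {L, v, R} \<subseteq> S'"
proof -
  have key: "(R \<le> n \<and> (\<forall>i. L < i \<and> i < v \<longrightarrow> {i, R} \<notin> E))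
     \<or> (\<exists>x. L < x \<and> x < v \<and> {x, v} \<in> E \<and> (\<forall>i. L < i \<and> i < x \<longrightarrow> {i, v} \<notin> E) \<and> {x, R} \<in> hat_edges n E)"
  proof (cases "R = n + 1")
    case True
    have "v \<noteq> L + 1"
    proof
      assume "v = L + 1"
      then have "{L, v, R} = {v - 1, v, n + 1} \<and> 0 < v \<and> v < n + 1" using True wn vw v1 by auto
      then have "{L, v, R} \<in> cyclic_faces2 n" unfolding cyclic_faces2_def by blast
      then show False using nf by blast
    qed
    then have Lv: "L + 1 < v" using Lprops(1) by linarith
    have "{v - 1, v - 1 + 1} \<in> E" using ppath[OF P, of "v - 1"] Lv vw wn by auto
    then have y: "L < v - 1" "v - 1 < v" "{v - 1, v} \<in> E" using Lv by auto
    obtain x where x: "L < x \<and> x < v \<and> {x, v} \<in> E" and xmin: "\<forall>j. L < j \<and> j < v \<and> {j, v} \<in> E \<longrightarrow> x \<le> j"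
      using ex_min[of "\<lambda>j. L < j \<and> j < v \<and> {j, v} \<in> E" "v - 1"] y by blast
    have "{x, R} \<in> hat_edges n E" using hat_iff[of x R n E] True x vw wn by auto
    moreover have "\<forall>i. L < i \<and> i < x \<longrightarrow> {i, v} \<notin> E"
    proof (intro allI impI notI)
      fix i assume i: "L < i \<and> i < x" "{i, v} \<in> E"
      then have "x \<le> i" using xmin x by auto
      then show False using i by linarith
    qed
    ultimately show ?thesis using x by blast
  next
    case False
    then have Rn: "R \<le> n" using Rprops(2) by linarith
    show ?thesis
    proof (cases "\<forall>i. L < i \<and> i < v \<longrightarrow> {i, R} \<notin> E")
      case True then show ?thesis using Rn by blast
    next
      case False
      then obtain i0 where i0: "L < i0 \<and> i0 < v \<and> {i0, R} \<in> E" by blast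
      obtain m where m: "L < m \<and> m < v \<and> {m, R} \<in> E" and mmax: "\<forall>j. L < j \<and> j < v \<and> {j, R} \<in> E \<longrightarrow> j \<le> m"
        using ex_max[of "\<lambda>j. L < j \<and> j < v \<and> {j, R} \<in> E" i0 v] i0 by blast
      have "m + 1 < R" using m Rprops(1) vw by linarith
      then obtain z where z: "m < z" "z < R" "{m, z} \<in> E" "{z, R} \<in> E" using pbar[OF P] m by blast
      have zv: "z = v"
      proof (rule ccontr)
        assume "z \<noteq> v"
        then consider "z < v" | "v < z \<and> z < w" | "z = w" | "w < z" by linarith
        then show False
        proof cases
          case 1 then show False using mmax[rule_format, of z] z m by auto
        next
          case 2
          have "{m, w} \<in> E" using pX[OF P _ _ _ z(3) Evw] 2 m by auto
          then show False using Lprops(3)[of m] m by auto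
        next
          case 3 then show False using Lprops(3)[of m] m z by auto
        next
          case 4 then show False using span[of m z] z m by auto
        qed
      qed
      then have mv: "{m, v} \<in> E" using z by simp
      obtain x where x: "L < x \<and> x < v \<and> {x, v} \<in> E" and xmin: "\<forall>j. L < j \<and> j < v \<and> {j, v} \<in> E \<longrightarrow> x \<le> j"
        using ex_min[of "\<lambda>j. L < j \<and> j < v \<and> {j, v} \<in> E" m] m mv by blast
      have "x \<le> m" using xmin m mv by blast
      have "{x, R} \<in> E"
      proof (cases "x = m")
        case True then show ?thesis using m by simp
      next
        case False
        then have "x < m" using \<open>x \<le> m\<close> by linarith
        have "v < R" using vw Rprops(1) by linarith
        then show ?thesis using pX[OF P \<open>x < m\<close> _ \<open>v < R\<close>] m x by auto
      qed
      moreover have "\<forall>i. L < i \<and> i < x \<longrightarrow> {i, v} \<notin> E"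
      proof (intro allI impI notI)
        fix i assume i: "L < i \<and> i < x" "{i, v} \<in> E"
        then have "x \<le> i" using xmin x by auto
        then show False using i by linarith
      qed
      ultimately show ?thesis using x E_hat by blast
    qed
  qed
  from key show ?thesis
  proof (elim disjE conjE exE)
    assume A: "R \<le> n" "\<forall>i. L < i \<and> i < v \<longrightarrow> {i, R} \<notin> E"
    have vR: "v < R" using Rprops(1) vw by linarith
    have "ellG n E v R = L"
    proof (rule ell_eq)
      show "L < v" "{L, R} \<in> hat_edges n E" using Lprops(1) LR_hat by auto
      show "\<forall>i. L < i \<and> i < v \<longrightarrow> {i, R} \<notin> hat_edges n E"
      proof (intro allI impI)
        fix i assume i: "L < i \<and> i < v"
        then have "{i, R} \<notin> E" using A by blast
        moreover have "i < R" "1 \<le> i" using i vR by auto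
        ultimately show "{i, R} \<notin> hat_edges n E" using hat_E[of i R n E] A(1) by auto
      qed
    qed
    moreover have "R < rG n E v R" using r_props[OF P vR R_E[OF A(1)]] by blast
    ultimately have eq: "xiG n E v R = {L, v, R, rG n E v R}" unfolding xiG_def by simp
    have "rG n E v R \<notin> {L, v, w, R}" using \<open>R < rG n E v R\<close> Lprops(1) vw Rprops(1) by auto
    then show ?thesis using in_Xi[OF vR R_E[OF A(1)], of n] eq by (intro bexI[of _ "xiG n E v R"]) auto
  next
    fix x assume x: "L < x" "x < v" "{x, v} \<in> E" "\<forall>i. L < i \<and> i < x \<longrightarrow> {i, v} \<notin> E" "{x, R} \<in> hat_edges n E"
    have "ellG n E x v = L"
    proof (rule ell_eq)
      have "{L, v} \<in> hat_edges n E"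
      proof (cases "0 < L")
        case True then show ?thesis using W' E_hat by blast
      next
        case False then show ?thesis using hat_iff[of L v n E] Lprops(1) vw wn by auto
      qed
      then show "L < x" "{L, v} \<in> hat_edges n E" using x by auto
      show "\<forall>i. L < i \<and> i < x \<longrightarrow> {i, v} \<notin> hat_edges n E"
      proof (intro allI impI)
        fix i assume i: "L < i \<and> i < x"
        then have "{i, v} \<notin> E" using x by blast
        moreover have "i < v" "1 \<le> i" "v \<le> n" using i x vw wn by auto
        ultimately show "{i, v} \<notin> hat_edges n E" using hat_E[of i v n E] by blast
      qed
    qed
    moreover have "rG n E x v = R"
    proof (rule r_eq[OF P])
      show "v < R" "{x, R} \<in> hat_edges n E" using x vw Rprops(1) by auto
      show "\<forall>i. v < i \<and> i < R \<longrightarrow> {x, i} \<notin> hat_edges n E"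
      proof (intro allI impI notI)
        fix i assume i: "v < i \<and> i < R" "{x, i} \<in> hat_edges n E"
        have "1 \<le> x" "i \<le> n" "x < i" using x i Rprops(2) by auto
        then have xi: "{x, i} \<in> E" using hat_E[of x i n E] i by auto
        consider "i < w" | "i = w" | "w < i" by linarith
        then show False
        proof cases
          case 1
          have "{x, w} \<in> E" using pX[OF P x(2) _ 1 xi Evw] i by auto
          then show False using Lprops(3)[of x] x by auto
        next
          case 2 then show False using Lprops(3)[of x] xi x by auto
        next
          case 3 then show False using span[OF xi] i x by auto
        qed
      qed
    qed
    ultimately have eq: "xiG n E x v = {L, x, v, R}" unfolding xiG_def by simp
    have "x \<notin> {L, v, w, R}" using x Lprops(1) vw Rprops(1) by auto
    then show ?thesis using in_Xi[OF x(2) x(3), of n] eq by (intro bexI[of _ "xiG n E x v"]) auto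
  qed
qed

end

lemma four: fixes l v w r a b c :: nat
  assumes "l < v" "v < w" "w < r" "a < b" "b < c" "{a, b, c} \<subseteq> {l, v, w, r}"
  shows "(a = v \<and> b = w \<and> c = r) \<or> (a = l \<and> b = w \<and> c = r) \<or> (a = l \<and> b = v \<and> c = r) \<or> (a = l \<and> b = v \<and> c = w)"
proof -
  have "a \<in> {l, v, w, r}" "b \<in> {l, v, w, r}" "c \<in> {l, v, w, r}" using assms(6) by auto
  then show ?thesis using assms(1-5) by (elim insertE; simp; linarith)
qed

theorem lemma11:
  fixes n :: nat and E :: "nat set set" and S :: "nat set" and a b c :: nat
  assumes "persistent n E"
    and "S \<in> Xi n E"
    and "a < b" and "b < c"
    and "{a, b, c} \<subseteq> S"
    and "{a, b, c} \<notin> cyclic_faces2 n"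
  shows "\<exists>S'\<in>Xi n E. S' \<noteq> S \<and> {a, b, c} \<subseteq> S'"
proof -
  obtain v w where vw: "v < w" "{v, w} \<in> E" "S = xiG n E v w"
    using assms(2) unfolding Xi_def by blast
  have SS: "S = {ellG n E v w, v, w, rG n E v w}" using vw(3) unfolding xiG_def by simp
  have o: "ellG n E v w < v" "w < rG n E v w"
    using ell_props[OF assms(1) vw(1,2)] r_props[OF assms(1) vw(1,2)] by auto
  from four[OF o(1) vw(1) o(2) assms(3,4)] assms(5) SS
  consider "a = v \<and> b = w \<and> c = rG n E v w" | "a = ellG n E v w \<and> b = w \<and> c = rG n E v w"
    | "a = ellG n E v w \<and> b = v \<and> c = rG n E v w" | "a = ellG n E v w \<and> b = v \<and> c = w" by blast
  then show ?thesis
  proof cases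
    case 1
    then have abc: "{a, b, c} = {v, w, rG n E v w}" by simp
    have "{v, w, rG n E v w} \<notin> cyclic_faces2 n" using assms(6) unfolding abc .
    from case0[OF assms(1) vw(1,2) this] show ?thesis unfolding SS abc .
  next
    case 2
    then have abc: "{a, b, c} = {ellG n E v w, w, rG n E v w}" by simp
    have "{ellG n E v w, w, rG n E v w} \<notin> cyclic_faces2 n" using assms(6) unfolding abc .
    from case1[OF assms(1) vw(1,2) this] show ?thesis unfolding SS abc .
  next
    case 3
    then have abc: "{a, b, c} = {ellG n E v w, v, rG n E v w}" by simp
    have "{ellG n E v w, v, rG n E v w} \<notin> cyclic_faces2 n" using assms(6) unfolding abc .
    from case2[OF assms(1) vw(1,2) this] show ?thesis unfolding SS abc .
  next
    case 4
    then have abc: "{a, b, c} = {ellG n E v w, v, w}" by simp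
    have "{ellG n E v w, v, w} \<notin> cyclic_faces2 n" using assms(6) unfolding abc .
    from case3[OF assms(1) vw(1,2) this] show ?thesis unfolding SS abc .
  qed
qed

end
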